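(* Let $m\geq 0$, $n\geq 1$, and let $\lambda$ be a partition of $n$ with $m$-Durfee rectangle symbol $(\alpha,\beta)_{(m+j)\times j}$. Then $\operatorname{rank}(\lambda)\geq -m+1$ if and only if either $j=0$, or $j\geq 1$ and $\ell(\beta)+1\leq \ell(\alpha)$.
   Context: For a partition $\lambda=(\lambda_1\geq\lambda_2\geq\cdots)$, $\ell(\lambda)$ is its number of parts and $\operatorname{rank}(\lambda)=\lambda_1-\ell(\lambda)$. The $m$-Durfee rectangle symbol of $\lambda$ is defined as follows. - If $\ell(\lambda)>m$, let $j\geq1$ be the largest integer with $\lambda_{m+j}\geq j$; this gives the $(m+j)\times j$ rectangle (with $m+j$ rows and $j$ columns) in the Ferrers diagram. Then $\alpha=(\alpha_1,\ldots,\alpha_s)$ is the partition formed by the columns to the right of the rectangle within the first $m+j$ rows: $\alpha_i$ is the number of $k\leq m+j$ with $\lambda_k\geq j+i$. Also $\beta=(\beta_1,\ldots,\beta_t)=(\lambda_{m+j+1},\lambda_{m+j+2},\ldots)$ consists of the rows below the rectangle. Thus $m+j\geq\alpha_1\geq\cdots\geq\alpha_s$, $j\geq\beta_1\geq\cdots\geq\beta_t$, and $n=j(m+j)+\sum\alpha_i+\sum\beta_i$. - If $\ell(\lambda)\leq m$, one sets $j=0$, $\alpha=\lambda'$ (the conjugate of $\lambda$) and $\beta=\emptyset$. The symbol is written $(\alpha,\beta)_{(m+j)\times j}$, and $\ell(\alpha),\ell(\beta)$ denote the numbers of parts of $\alpha$ and $\beta$. *)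

theory Defs
  imports Main
begin

definition is_partition_of :: "nat list \<Rightarrow> nat \<Rightarrow> bool" where
  "is_partition_of lam n \<longleftrightarrow> sorted_wrt (\<ge>) lam \<and> (\<forall>x\<in>set lam. 0 < x) \<and> sum_list lam = n"

(* 1-based part lambda_k, with lambda_k = 0 for k > l(lambda) *)
definition part :: "nat list \<Rightarrow> nat \<Rightarrow> nat" where
  "part lam k = (if 1 \<le> k \<and> k \<le> length lam then lam ! (k - 1) else 0)"

definition prank :: "nat list \<Rightarrow> int" where
  "prank lam = int (part lam 1) - int (length lam)"

definition conjugate :: "nat list \<Rightarrow> nat list" where
  "conjugate lam = map (\<lambda>i. card {k. 1 \<le> k \<and> k \<le> length lam \<and> part lam k \<ge> i}) [1..<part lam 1 + 1]"

definition durfee_j :: "nat \<Rightarrow> nat list \<Rightarrow> nat" where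
  "durfee_j m lam = (if length lam \<le> m then 0
      else (GREATEST j. 1 \<le> j \<and> part lam (m + j) \<ge> j))"

(* alpha: columns to the right of the (m+j) x j rectangle in the first m+j rows;
   alpha_i = #{k <= m+j. lambda_k >= j+i}, for i = 1 .. lambda_1 - j (exactly the nonzero ones) *)
definition durfee_alpha :: "nat \<Rightarrow> nat list \<Rightarrow> nat list" where
  "durfee_alpha m lam = (let j = durfee_j m lam in
     if length lam \<le> m then conjugate lam
     else map (\<lambda>i. card {k. 1 \<le> k \<and> k \<le> m + j \<and> part lam k \<ge> j + i}) [1..<part lam 1 - j + 1])"

definition durfee_beta :: "nat \<Rightarrow> nat list \<Rightarrow> nat list" where
  "durfee_beta m lam = (if length lam \<le> m then [] else drop (m + durfee_j m lam) lam)"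

end

theory Submission
  imports Defs
begin

lemma part_bound: "part lam k \<ge> 1 \<Longrightarrow> k \<le> length lam \<and> 1 \<le> k"
  unfolding part_def by (auto split: if_splits)

lemma part_first_ge:
  assumes "sorted_wrt (\<ge>) lam" "1 \<le> k" "k \<le> length lam"
  shows "part lam k \<le> part lam 1"
proof (cases "k = 1")
  case True then show ?thesis by simp
next
  case False
  then have "lam ! 0 \<ge> lam ! (k - 1)"
    using assms sorted_wrt_nth_less[OF assms(1), of 0 "k - 1"] by auto
  then show ?thesis using assms unfolding part_def by auto
qed

theorem proposition2p3:
  fixes m n :: nat and lam :: "nat list"
  assumes "n \<ge> 1" and "is_partition_of lam n"
  shows "prank lam \<ge> - int m + 1 \<longleftrightarrow>
    (durfee_j m lam = 0 \<or>
     (durfee_j m lam \<ge> 1 \<and> length (durfee_beta m lam) + 1 \<le> length (durfee_alpha m lam)))"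
proof -
  from assms(2) have srt: "sorted_wrt (\<ge>) lam" and pos: "\<forall>x\<in>set lam. 0 < x"
    and sm: "sum_list lam = n" unfolding is_partition_of_def by auto
  have ne: "lam \<noteq> []" using sm assms(1) by auto
  have p1: "part lam 1 \<ge> 1" using ne pos unfolding part_def
    by (cases lam) auto
  show ?thesis
  proof (cases "length lam \<le> m")
    case True
    then have "durfee_j m lam = 0" unfolding durfee_j_def by simp
    moreover have "prank lam \<ge> - int m + 1" using True p1 unfolding prank_def by simp
    ultimately show ?thesis by simp
  next
    case False
    define P where "P = (\<lambda>j. 1 \<le> j \<and> part lam (m + j) \<ge> j)"
    have dj: "durfee_j m lam = (GREATEST j. P j)" using False unfolding durfee_j_def P_def by simp
    have "lam ! m \<in> set lam" using False by simp
    then have "lam ! m > 0" using pos by blast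
    then have P1: "P 1" unfolding P_def part_def using False by auto
    have bnd: "\<forall>y. P y \<longrightarrow> y \<le> length lam"
      using part_bound unfolding P_def by (metis add_leD2 le_trans)
    have Pj: "P (durfee_j m lam)" unfolding dj by (rule GreatestI_nat[where P=P, OF P1]) (use bnd in blast)
    define j where "j = durfee_j m lam"
    have j1: "1 \<le> j" and pj: "part lam (m + j) \<ge> j" using Pj unfolding P_def j_def by auto
    have mj: "m + j \<le> length lam" using part_bound[of lam "m+j"] pj j1 by auto
    have jl1: "j \<le> part lam 1" using part_first_ge[OF srt, of "m+j"] mj j1 pj by auto
    have la: "length (durfee_alpha m lam) = part lam 1 - j"
      using False unfolding durfee_alpha_def j_def Let_def by (simp only: if_False length_map length_upt)
    have lb: "length (durfee_beta m lam) = length lam - (m + j)"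
      using False unfolding durfee_beta_def j_def by simp
    show ?thesis unfolding prank_def la lb using j1 mj jl1
      by (simp add: j_def[symmetric]) linarith
  qed
qed

end
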